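(* Assume the context distribution is stationary, i.e. $p(x,t)=p(x)p(t)$ on $\mathcal{X}\times[0,T]$ and the context distribution at the target time satisfies $p(x\mid t')=p(x)$. Suppose the logging policy $\pi_0$ satisfies common support for $\pi_e$ and $t'$, i.e. $\pi_e(a\mid x,t')>0 \implies \pi_0(a\mid x,t)>0$ for all $x\in\mathcal{X}$, $t\in[0,T]$, $a\in\mathcal{A}$, and that the time feature function $\phi$ satisfies $p(\phi(t'))>0$. Then the OPFV estimator has bias $$\mathrm{Bias}\big(\hat V^{\mathrm{OPFV}}_{t'}(\pi_e;\mathcal{D})\big)=\mathbb{E}_{p(x,t)\pi_e(a\mid x,t')}\left[\frac{\mathbb{I}_\phi(t,t')}{p(\phi(t'))}\Big(\Delta_q(x,t,t',a)-\Delta_{\hat f}(x,t,t',a)\Big)\right].$$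
   Context: Contexts $x\in\mathcal{X}$, a finite action set $\mathcal{A}$, continuous time $t$, and rewards $r\in[0,r_{\max}]$. The logged data $\mathcal{D}=\{(x_i,t_i,a_i,r_i)\}_{i=1}^n$ consists of $n$ i.i.d. draws with $(x,t)\sim p(x,t)$ supported on $\mathcal{X}\times[0,T]$ ($T>0$ the end of the logging window), $a\sim\pi_0(a\mid x,t)$ (logging policy), $r\sim p(r\mid x,t,a)$; the reward distributions $p(r\mid x,t,a)$ are defined for all times $t\ge 0$, including future times. Let $q(x,t,a)=\mathbb{E}[r\mid x,t,a]$. A target time $t'>T$ and an evaluation policy $\pi_e(a\mid x,t)$ are fixed; the future policy value is $V_{t'}(\pi_e)=\mathbb{E}_{p(x\mid t')\pi_e(a\mid x,t')}[q(x,t',a)]$. A time feature function is any map $\phi$ from times to a set of labels; $\mathbb{I}_\phi(t,t')=\mathbb{I}\{\phi(t)=\phi(t')\}$ and $p(\phi(t'))=\int_0^T p(s)\,\mathbb{I}_\phi(s,t')\,ds$, where $p(t)$ is the marginal density of $t$. $\hat f:\mathcal{X}\times[0,\infty)\times\mathcal{A}\to\mathbb{R}$ is a fixed (non-random) reward regressor. The OPFV estimator is $$\hat V^{\mathrm{OPFV}}_{t'}(\pi_e;\mathcal{D})=\frac1n\sum_{i=1}^n\left\{\frac{\mathbb{I}_\phi(t_i,t')}{p(\phi(t'))}\frac{\pi_e(a_i\mid x_i,t')}{\pi_0(a_i\mid x_i,t_i)}\big(r_i-\hat f(x_i,t_i,a_i)\big)+\mathbb{E}_{\pi_e(a\mid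 x_i,t')}[\hat f(x_i,t',a)]\right\}.$$ $\mathrm{Bias}(\hat V)=\mathbb{E}_{\mathcal{D}}[\hat V]-V_{t'}(\pi_e)$. $\Delta_q(x,t,t',a)=q(x,t,a)-q(x,t',a)$ and $\Delta_{\hat f}(x,t,t',a)=\hat f(x,t,a)-\hat f(x,t',a)$. *)

theory Defs
  imports "HOL-Probability.Probability"
begin

definition ind_phi :: "(real \<Rightarrow> 'l) \<Rightarrow> real \<Rightarrow> real \<Rightarrow> real" where
  "ind_phi phi t t' = (if phi t = phi t' then 1 else 0)"

definition p_phi :: "(real \<Rightarrow> 'l) \<Rightarrow> (real \<Rightarrow> real) \<Rightarrow> real \<Rightarrow> real \<Rightarrow> real" where
  "p_phi phi pt T t' = integral\<^sup>L lborel (\<lambda>s. indicator {0..T} s * pt s * ind_phi phi s t')"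

definition qfun :: "('x \<Rightarrow> real \<Rightarrow> 'a \<Rightarrow> real measure) \<Rightarrow> 'x \<Rightarrow> real \<Rightarrow> 'a \<Rightarrow> real" where
  "qfun R x t a = integral\<^sup>L (R x t a) (\<lambda>r. r)"

definition act_dist :: "('a::finite \<Rightarrow> real) \<Rightarrow> 'a measure" where
  "act_dist p = density (count_space UNIV) (\<lambda>a. ennreal (p a))"

text \<open>Distribution of one logged record (x,t,a,r):
  (x,t) ~ Pxt, a ~ pi0(.|x,t), r ~ R(x,t,a).  Px supplies the sigma algebra on contexts.\<close>
definition sample_dist ::
  "'x measure \<Rightarrow> ('x \<times> real) measure \<Rightarrow> ('x \<Rightarrow> real \<Rightarrow> 'a::finite \<Rightarrow> real)
     \<Rightarrow> ('x \<Rightarrow> real \<Rightarrow> 'a \<Rightarrow> real measure) \<Rightarrow> ('x \<times> real \<times> 'a \<times> real) measure" where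
  "sample_dist Px Pxt pi0 R =
     Pxt \<bind> (\<lambda>(x, t). act_dist (pi0 x t) \<bind>
       (\<lambda>a. distr (R x t a) (Px \<Otimes>\<^sub>M borel \<Otimes>\<^sub>M count_space UNIV \<Otimes>\<^sub>M borel)
               (\<lambda>r. (x, t, a, r))))"

definition data_dist ::
  "nat \<Rightarrow> 'x measure \<Rightarrow> ('x \<times> real) measure \<Rightarrow> ('x \<Rightarrow> real \<Rightarrow> 'a::finite \<Rightarrow> real)
     \<Rightarrow> ('x \<Rightarrow> real \<Rightarrow> 'a \<Rightarrow> real measure) \<Rightarrow> (nat \<Rightarrow> 'x \<times> real \<times> 'a \<times> real) measure" where
  "data_dist n Px Pxt pi0 R = PiM {..<n} (\<lambda>_. sample_dist Px Pxt pi0 R)"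

definition opfv ::
  "(real \<Rightarrow> 'l) \<Rightarrow> (real \<Rightarrow> real) \<Rightarrow> real \<Rightarrow> real
     \<Rightarrow> ('x \<Rightarrow> real \<Rightarrow> 'a::finite \<Rightarrow> real) \<Rightarrow> ('x \<Rightarrow> real \<Rightarrow> 'a \<Rightarrow> real)
     \<Rightarrow> ('x \<Rightarrow> real \<Rightarrow> 'a \<Rightarrow> real) \<Rightarrow> nat \<Rightarrow> (nat \<Rightarrow> 'x \<times> real \<times> 'a \<times> real) \<Rightarrow> real" where
  "opfv phi pt T t' pie pi0 fhat n D =
     (1 / real n) * (\<Sum>i<n. (case D i of (x, t, a, r) \<Rightarrow>
        ind_phi phi t t' / p_phi phi pt T t' * (pie x t' a / pi0 x t a) * (r - fhat x t a)
        + (\<Sum>b\<in>UNIV. pie x t' b * fhat x t' b)))"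

definition policy_value ::
  "'x measure \<Rightarrow> ('x \<Rightarrow> real \<Rightarrow> 'a::finite \<Rightarrow> real) \<Rightarrow> ('x \<Rightarrow> real \<Rightarrow> 'a \<Rightarrow> real measure)
     \<Rightarrow> real \<Rightarrow> real" where
  "policy_value Px_t' pie R t' = integral\<^sup>L Px_t' (\<lambda>x. \<Sum>a\<in>UNIV. pie x t' a * qfun R x t' a)"

end

theory Submission
  imports Defs
begin

lemma integral_bind_real:
  fixes f :: "_ \<Rightarrow> real"
  assumes f[measurable]: "f \<in> borel_measurable B"
    and N[measurable]: "N \<in> measurable M (subprob_algebra B)"
    and int: "integrable (M \<bind> N) f"
  shows "integral\<^sup>L (M \<bind> N) f = (\<integral>x. integral\<^sup>L (N x) f \<partial>M)"
proof -
  define P where "P x = (\<integral>\<^sup>+y. ennreal (f y) \<partial>N x)" for x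
  define Q where "Q x = (\<integral>\<^sup>+y. ennreal (- f y) \<partial>N x)" for x
  have Pm[measurable]: "P \<in> borel_measurable M" unfolding P_def
    by (rule measurable_compose[OF N nn_integral_measurable_subprob_algebra]) measurable
  have Qm[measurable]: "Q \<in> borel_measurable M" unfolding Q_def
    by (rule measurable_compose[OF N nn_integral_measurable_subprob_algebra]) measurable
  have iP: "(\<integral>\<^sup>+x. ennreal (f x) \<partial>(M \<bind> N)) = (\<integral>\<^sup>+x. P x \<partial>M)"
    unfolding P_def by (rule nn_integral_bind[OF _ N]) measurable
  have iQ: "(\<integral>\<^sup>+x. ennreal (- f x) \<partial>(M \<bind> N)) = (\<integral>\<^sup>+x. Q x \<partial>M)"
    unfolding Q_def by (rule nn_integral_bind[OF _ N]) measurable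
  have fP: "(\<integral>\<^sup>+x. P x \<partial>M) < \<infinity>"
  proof -
    have "(\<integral>\<^sup>+x. ennreal (f x) \<partial>(M \<bind> N)) \<le> (\<integral>\<^sup>+x. ennreal (norm (f x)) \<partial>(M \<bind> N))"
      by (intro nn_integral_mono ennreal_leI) auto
    also have "\<dots> < \<infinity>" using int by (simp add: integrable_iff_bounded)
    finally show ?thesis using iP by simp
  qed
  have fQ: "(\<integral>\<^sup>+x. Q x \<partial>M) < \<infinity>"
  proof -
    have "(\<integral>\<^sup>+x. ennreal (- f x) \<partial>(M \<bind> N)) \<le> (\<integral>\<^sup>+x. ennreal (norm (f x)) \<partial>(M \<bind> N))"
      by (intro nn_integral_mono ennreal_leI) auto
    also have "\<dots> < \<infinity>" using int by (simp add: integrable_iff_bounded)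
    finally show ?thesis using iQ by simp
  qed
  have aeP: "AE x in M. P x \<noteq> \<infinity>" using fP by (intro nn_integral_PInf_AE) auto
  have aeQ: "AE x in M. Q x \<noteq> \<infinity>" using fQ by (intro nn_integral_PInf_AE) auto
  have pw: "ennreal (norm v) = ennreal v + ennreal (- v)" for v :: real
    by (cases "v \<ge> 0") (auto simp: ennreal_neg)
  have inner: "AE x in M. integral\<^sup>L (N x) f = enn2real (P x) - enn2real (Q x)"
    using aeP aeQ AE_space
  proof eventually_elim
    case (elim x)
    show ?case
    proof -
      have True: "x \<in> space M" using elim by simp
      have sN: "sets (N x) = sets B" using N True by (rule sets_kernel)
      have fm: "f \<in> borel_measurable (N x)" by (simp only: measurable_cong_sets[OF sN refl] f)
      have "(\<integral>\<^sup>+y. ennreal (norm (f y)) \<partial>N x) = (\<integral>\<^sup>+y. ennreal (f y) + ennreal (- f y) \<partial>N x)"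
        by (intro nn_integral_cong) (rule pw)
      also have "\<dots> = P x + Q x" unfolding P_def Q_def
        by (intro nn_integral_add) (use fm in auto)
      finally have "integrable (N x) f" using elim fm
        by (intro integrableI_bounded) (auto simp: less_top)
      then show ?thesis unfolding P_def Q_def by (rule real_lebesgue_integral_def)
    qed
  qed
  have eP: "AE x in M. ennreal (enn2real (P x)) = P x" using aeP by eventually_elim (simp add: less_top)
  have eQ: "AE x in M. ennreal (enn2real (Q x)) = Q x" using aeQ by eventually_elim (simp add: less_top)
  have intP: "integrable M (\<lambda>x. enn2real (P x))"
    using fP eP by (intro integrableI_nonneg) (auto simp: nn_integral_cong_AE)
  have intQ: "integrable M (\<lambda>x. enn2real (Q x))"
    using fQ eQ by (intro integrableI_nonneg) (auto simp: nn_integral_cong_AE)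
  have "(\<integral>x. integral\<^sup>L (N x) f \<partial>M) = (\<integral>x. enn2real (P x) - enn2real (Q x) \<partial>M)"
    using inner by (intro integral_cong_AE) auto
  also have "\<dots> = (\<integral>x. enn2real (P x) \<partial>M) - (\<integral>x. enn2real (Q x) \<partial>M)"
    using intP intQ by simp
  also have "(\<integral>x. enn2real (P x) \<partial>M) = enn2real (\<integral>\<^sup>+x. P x \<partial>M)"
    using eP by (subst integral_eq_nn_integral) (auto simp: nn_integral_cong_AE)
  also have "(\<integral>x. enn2real (Q x) \<partial>M) = enn2real (\<integral>\<^sup>+x. Q x \<partial>M)"
    using eQ by (subst integral_eq_nn_integral) (auto simp: nn_integral_cong_AE)
  finally show ?thesis using real_lebesgue_integral_def[OF int] iP iQ by simp
qed

lemma act_sets[simp, measurable_cong]: "sets (act_dist p) = sets (count_space UNIV)"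
  by (simp add: act_dist_def)

lemma act_space[simp]: "space (act_dist p) = UNIV"
  by (simp add: act_dist_def)

lemma act_emeasure:
  fixes p :: "'a::finite \<Rightarrow> real"
  shows "emeasure (act_dist p) A = (\<Sum>a\<in>A. ennreal (p a))"
proof -
  have "emeasure (act_dist p) A = (\<integral>\<^sup>+a. ennreal (p a) * indicator A a \<partial>count_space UNIV)"
    unfolding act_dist_def by (subst emeasure_density) auto
  also have "\<dots> = (\<Sum>a\<in>UNIV. ennreal (p a) * indicator A a)"
    by (simp add: nn_integral_count_space_finite)
  also have "\<dots> = (\<Sum>a\<in>A. ennreal (p a))"
    by (simp add: sum.If_cases indicator_def Int_absorb1)
  finally show ?thesis .
qed

lemma act_prob:
  fixes p :: "'a::finite \<Rightarrow> real"
  assumes "\<And>a. p a \<ge> 0" "(\<Sum>a\<in>UNIV. p a) = 1"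
  shows "prob_space (act_dist p)"
proof
  have "emeasure (act_dist p) (space (act_dist p)) = (\<Sum>a\<in>UNIV. ennreal (p a))"
    by (simp add: act_emeasure)
  also have "\<dots> = ennreal (\<Sum>a\<in>UNIV. p a)" using assms by (simp add: sum_ennreal)
  finally show "emeasure (act_dist p) (space (act_dist p)) = 1" using assms by simp
qed

lemma act_nn_integral:
  fixes p :: "'a::finite \<Rightarrow> real"
  shows "(\<integral>\<^sup>+a. g a \<partial>act_dist p) = (\<Sum>a\<in>UNIV. ennreal (p a) * g a)"
  unfolding act_dist_def by (simp add: nn_integral_density nn_integral_count_space_finite)

lemma act_integral:
  fixes p :: "'a::finite \<Rightarrow> real" and g :: "'a \<Rightarrow> real"
  assumes "\<And>a. p a \<ge> 0"
  shows "(\<integral>a. g a \<partial>act_dist p) = (\<Sum>a\<in>UNIV. p a * g a)"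
  unfolding act_dist_def using assms
  by (simp add: integral_density lebesgue_integral_count_space_finite)

lemma act_measurable:
  fixes pp :: "'b \<Rightarrow> 'a::finite \<Rightarrow> real"
  assumes "\<And>a. (\<lambda>y. pp y a) \<in> borel_measurable M"
    and "\<And>y a. pp y a \<ge> 0" and "\<And>y. (\<Sum>a\<in>UNIV. pp y a) = 1"
  shows "(\<lambda>y. act_dist (pp y)) \<in> measurable M (subprob_algebra (count_space UNIV))"
proof (rule measurable_subprob_algebra)
  fix y show "subprob_space (act_dist (pp y))"
    using act_prob[of "pp y"] assms by (simp add: prob_space_imp_subprob_space)
next
  fix A :: "'a set"
  show "(\<lambda>y. emeasure (act_dist (pp y)) A) \<in> borel_measurable M"
    unfolding act_emeasure using assms(1) by measurable
qed simp

theorem theorem3p3: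
  fixes Px :: "'x measure" and Px_t' :: "'x measure" and Pxt :: "('x \<times> real) measure"
    and pt :: "real \<Rightarrow> real" and T t' rmax :: real and n :: nat
    and pi0 pie :: "'x \<Rightarrow> real \<Rightarrow> 'a::finite \<Rightarrow> real"
    and R :: "'x \<Rightarrow> real \<Rightarrow> 'a \<Rightarrow> real measure"
    and fhat :: "'x \<Rightarrow> real \<Rightarrow> 'a \<Rightarrow> real"
    and phi :: "real \<Rightarrow> 'l"
  assumes n_pos: "n > 0"
    and T_pos: "T > 0" and t'_gt: "t' > T"
    \<comment> \<open>context distribution p(x) and time density p(t) supported on [0,T]\<close>
    and Px_prob: "prob_space Px"
    and pt_meas: "pt \<in> borel_measurable borel"
    and pt_nonneg: "\<And>t. pt t \<ge> 0"
    and pt_supp: "\<And>t. t \<notin> {0..T} \<Longrightarrow> pt t = 0"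
    and pt_prob: "prob_space (density lborel (\<lambda>t. ennreal (pt t)))"
    \<comment> \<open>stationarity: p(x,t) = p(x) p(t) and p(x|t') = p(x)\<close>
    and stationary: "Pxt = Px \<Otimes>\<^sub>M density lborel (\<lambda>t. ennreal (pt t))"
    and target_ctx: "Px_t' = Px"
    \<comment> \<open>policies are probability distributions over the finite action set\<close>
    and pi0_nonneg: "\<And>x t a. pi0 x t a \<ge> 0"
    and pi0_sum: "\<And>x t. (\<Sum>a\<in>UNIV. pi0 x t a) = 1"
    and pie_nonneg: "\<And>x t a. pie x t a \<ge> 0"
    and pie_sum: "\<And>x t. (\<Sum>a\<in>UNIV. pie x t a) = 1"
    and pi0_meas: "\<And>a. (\<lambda>(x, t). pi0 x t a) \<in> borel_measurable (Px \<Otimes>\<^sub>M borel)"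
    and pie_meas: "\<And>a. (\<lambda>x. pie x t' a) \<in> borel_measurable Px"
    \<comment> \<open>reward distributions p(r|x,t,a), rewards in [0, rmax], measurable kernel\<close>
    and rmax_nonneg: "rmax \<ge> 0"
    and R_prob: "\<And>x t a. prob_space (R x t a)"
    and R_sets: "\<And>x t a. sets (R x t a) = sets borel"
    and R_range: "\<And>x t a. AE r in R x t a. 0 \<le> r \<and> r \<le> rmax"
    and R_meas: "(\<lambda>(x, t, a). R x t a)
                   \<in> measurable (Px \<Otimes>\<^sub>M borel \<Otimes>\<^sub>M count_space UNIV) (subprob_algebra borel)"
    \<comment> \<open>fixed reward regressor (measurable and bounded)\<close>
    and fhat_meas: "\<And>a. (\<lambda>(x, t). fhat x t a) \<in> borel_measurable (Px \<Otimes>\<^sub>M borel)"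
    and fhat_bdd: "\<exists>B. \<forall>x t a. \<bar>fhat x t a\<bar> \<le> B"
    \<comment> \<open>time feature function\<close>
    and phi_meas: "{s. phi s = phi t'} \<in> sets borel"
    and p_phi_pos: "p_phi phi pt T t' > 0"
    \<comment> \<open>common support\<close>
    and common_support: "\<And>x t a. x \<in> space Px \<Longrightarrow> t \<in> {0..T} \<Longrightarrow> pie x t' a > 0 \<Longrightarrow> pi0 x t a > 0"
  shows "integral\<^sup>L (data_dist n Px Pxt pi0 R) (opfv phi pt T t' pie pi0 fhat n)
           - policy_value Px_t' pie R t'
         = integral\<^sup>L Pxt (\<lambda>(x, t). \<Sum>a\<in>UNIV. pie x t' a *
             (ind_phi phi t t' / p_phi phi pt T t'
               * ((qfun R x t a - qfun R x t' a) - (fhat x t a - fhat x t' a))))"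
proof -
  define P where "P = density lborel (\<lambda>t. ennreal (pt t))"
  define S :: "('x \<times> real \<times> 'a \<times> real) measure" where "S = Px \<Otimes>\<^sub>M borel \<Otimes>\<^sub>M count_space UNIV \<Otimes>\<^sub>M borel"
  define h where "h = (\<lambda>(x, t, a, r). ind_phi phi t t' / p_phi phi pt T t' * (pie x t' a / pi0 x t a) * (r - fhat x t a)
        + (\<Sum>b\<in>UNIV. pie x t' b * fhat x t' b))"
  define K where "K = (\<lambda>(x, t). act_dist (pi0 x t) \<bind> (\<lambda>a. distr (R x t a) S (\<lambda>r. (x, t, a, r))))"
  have sample: "sample_dist Px Pxt pi0 R = Pxt \<bind> K" unfolding sample_dist_def K_def S_def ..
  interpret Px: prob_space Px by (rule Px_prob)
  interpret P: prob_space P using pt_prob unfolding P_def .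
  interpret PP: pair_prob_space Px P ..
  have Pxt_eq: "Pxt = Px \<Otimes>\<^sub>M P" using stationary unfolding P_def .
  have sets_P: "sets P = sets borel" unfolding P_def by simp
  have sets_Pxt: "sets Pxt = sets (Px \<Otimes>\<^sub>M borel)"
    unfolding Pxt_eq by (rule sets_pair_measure_cong[OF refl sets_P])
  have space_Pxt: "space Pxt = space Px \<times> UNIV"
    using sets_eq_imp_space_eq[OF sets_Pxt] by (simp add: space_pair_measure)
  have prob_Pxt: "prob_space Pxt" unfolding Pxt_eq by (rule prob_space_pair) unfold_locales
  note [measurable] = pi0_meas fhat_meas pie_meas R_meas
  have ind_eq: "ind_phi phi t t' = indicator {s. phi s = phi t'} t" for t
    by (simp add: ind_phi_def indicator_def)
  have ind_m[measurable]: "(\<lambda>t. ind_phi phi t t') \<in> borel_measurable borel"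
    unfolding ind_eq using phi_meas by measurable
  have Am: "(\<lambda>(x,t). act_dist (pi0 x t)) \<in> measurable (Px \<Otimes>\<^sub>M borel) (subprob_algebra (count_space UNIV))"
  proof -
    have "(\<lambda>y. act_dist (pi0 (fst y) (snd y))) \<in> measurable (Px \<Otimes>\<^sub>M borel) (subprob_algebra (count_space UNIV))"
      by (rule act_measurable) (use pi0_meas pi0_nonneg pi0_sum in \<open>auto simp: case_prod_beta'\<close>)
    then show ?thesis by (simp add: case_prod_beta')
  qed
  have Gm: "(\<lambda>w. R (fst (fst w)) (snd (fst w)) (snd w)) \<in> measurable ((Px \<Otimes>\<^sub>M borel) \<Otimes>\<^sub>M count_space UNIV) (subprob_algebra borel)"
  proof -
    have "(\<lambda>w. (fst (fst w), snd (fst w), snd w)) \<in> measurable ((Px \<Otimes>\<^sub>M borel) \<Otimes>\<^sub>M count_space UNIV) (Px \<Otimes>\<^sub>M borel \<Otimes>\<^sub>M count_space UNIV)"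
      by measurable
    from measurable_compose[OF this R_meas] show ?thesis by simp
  qed
  have Dm: "(\<lambda>w. distr (R (fst (fst w)) (snd (fst w)) (snd w)) S (\<lambda>r. (fst (fst w), snd (fst w), snd w, r)))
      \<in> measurable ((Px \<Otimes>\<^sub>M borel) \<Otimes>\<^sub>M count_space UNIV) (subprob_algebra S)"
    by (rule measurable_distr2[OF _ Gm]) (unfold S_def, measurable)
  have Km: "K \<in> measurable (Px \<Otimes>\<^sub>M borel) (subprob_algebra S)"
  proof -
    have "(\<lambda>z. act_dist (pi0 (fst z) (snd z)) \<bind> (\<lambda>a. distr (R (fst z) (snd z) a) S (\<lambda>r. (fst z, snd z, a, r))))
        \<in> measurable (Px \<Otimes>\<^sub>M borel) (subprob_algebra S)"
      by (rule measurable_bind'[OF Am[unfolded case_prod_beta']]) (use Dm in \<open>simp add: case_prod_beta'\<close>)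
    then show ?thesis unfolding K_def by (simp add: case_prod_beta')
  qed
  have KmP: "K \<in> measurable Pxt (subprob_algebra S)"
    using Km by (simp add: measurable_cong_sets[OF sets_Pxt refl])
  have rm: "(\<lambda>r. (x, t, a, r)) \<in> measurable (R x t a) S" if "x \<in> space Px" for x t a
  proof -
    have "(\<lambda>r. (x, t, a, r)) \<in> measurable borel S" unfolding S_def using that by measurable
    then show ?thesis by (simp add: measurable_cong_sets[OF R_sets refl])
  qed
  have Dprob: "prob_space (distr (R x t a) S (\<lambda>r. (x, t, a, r)))" if "x \<in> space Px" for x t a
    by (rule prob_space.prob_space_distr[OF R_prob rm[OF that]])
  have Dkern: "(\<lambda>a. distr (R x t a) S (\<lambda>r. (x, t, a, r))) \<in> measurable (act_dist (pi0 x t)) (subprob_algebra S)"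
    if "x \<in> space Px" for x t
  proof -
    have "(\<lambda>a. distr (R x t a) S (\<lambda>r. (x, t, a, r))) \<in> measurable (count_space UNIV) (subprob_algebra S)"
      unfolding measurable_count_space_eq1
      using Dprob[OF that] by (auto simp: space_subprob_algebra prob_space_imp_subprob_space)
    then show ?thesis by (simp add: measurable_cong_sets[OF act_sets refl])
  qed
  have Kprob: "prob_space (K z)" if zin: "z \<in> space Pxt" for z
  proof -
    obtain x t where z: "z = (x, t)" and x: "x \<in> space Px" using zin space_Pxt by (cases z) auto
    have "prob_space (act_dist (pi0 x t))" using act_prob pi0_nonneg pi0_sum by blast
    from prob_space.prob_space_bind[OF this _ Dkern[OF x]] Dprob[OF x]
    show ?thesis unfolding z K_def by simp
  qed
  have prob_sample: "prob_space (Pxt \<bind> K)"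
    using prob_space.prob_space_bind[OF prob_Pxt _ KmP] Kprob by auto
  have sets_sample: "sets (Pxt \<bind> K) = sets S"
    by (rule sets_bind_measurable[OF KmP prob_space.not_empty[OF prob_Pxt]])
  obtain Bf where Bf: "\<And>x t a. \<bar>fhat x t a\<bar> \<le> Bf" using fhat_bdd by blast
  have Bf0: "Bf \<ge> 0" using Bf[of undefined undefined undefined] by linarith
  define pf where "pf = p_phi phi pt T t'"
  have pf0: "pf > 0" unfolding pf_def by (rule p_phi_pos)
  define G where "G x = (\<Sum>b\<in>UNIV. pie x t' b * fhat x t' b)" for x
  have pie_le1: "pie x t a \<le> 1" for x t a
  proof -
    have "pie x t a \<le> (\<Sum>b\<in>UNIV. pie x t b)"
      by (rule member_le_sum) (auto simp: pie_nonneg)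
    then show ?thesis using pie_sum by simp
  qed
  have G_bd: "\<bar>G x\<bar> \<le> Bf" for x
  proof -
    have "\<bar>G x\<bar> \<le> (\<Sum>b\<in>UNIV. \<bar>pie x t' b * fhat x t' b\<bar>)" unfolding G_def by (rule sum_abs)
    also have "\<dots> \<le> (\<Sum>b\<in>UNIV. pie x t' b * Bf)"
      by (intro sum_mono) (auto simp: abs_mult pie_nonneg intro!: mult_left_mono Bf)
    also have "\<dots> = Bf" using pie_sum by (simp add: sum_distrib_right[symmetric])
    finally show ?thesis .
  qed
  have ind01: "0 \<le> ind_phi phi t t' \<and> ind_phi phi t t' \<le> 1" for t by (simp add: ind_phi_def)
  have ratio: "pi0 x t a * (pie x t' a / pi0 x t a) \<le> pie x t' a" for x t a
    using pi0_nonneg[of x t a] pie_nonneg[of x t' a] by (cases "pi0 x t a = 0") auto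
  have ratio_eq: "pi0 x t a * (pie x t' a / pi0 x t a) = pie x t' a" if "x \<in> space Px" "t \<in> {0..T}" for x t a
  proof (cases "pie x t' a > 0")
    case True then have "pi0 x t a > 0" using common_support that by blast
    then show ?thesis by simp
  next
    case False then have "pie x t' a = 0" using pie_nonneg[of x t' a] by linarith
    then show ?thesis by simp
  qed
  have m_pi0[measurable]: "(\<lambda>w::'x \<times> real \<times> 'a \<times> real. pi0 (fst w) (fst (snd w)) (fst (snd (snd w)))) \<in> borel_measurable S"
  proof (rule measurable_compose_countable[where f="\<lambda>a w. pi0 (fst w) (fst (snd w)) a"])
    fix a :: 'a
    have "(\<lambda>w::'x \<times> real \<times> 'a \<times> real. (fst w, fst (snd w))) \<in> measurable S (Px \<Otimes>\<^sub>M borel)" unfolding S_def by measurable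
    from measurable_compose[OF this pi0_meas[of a]] show "(\<lambda>w. pi0 (fst w) (fst (snd w)) a) \<in> borel_measurable S" by simp
  qed (unfold S_def, measurable)
  have m_fh[measurable]: "(\<lambda>w::'x \<times> real \<times> 'a \<times> real. fhat (fst w) (fst (snd w)) (fst (snd (snd w)))) \<in> borel_measurable S"
  proof (rule measurable_compose_countable[where f="\<lambda>a w. fhat (fst w) (fst (snd w)) a"])
    fix a :: 'a
    have "(\<lambda>w::'x \<times> real \<times> 'a \<times> real. (fst w, fst (snd w))) \<in> measurable S (Px \<Otimes>\<^sub>M borel)" unfolding S_def by measurable
    from measurable_compose[OF this fhat_meas[of a]] show "(\<lambda>w. fhat (fst w) (fst (snd w)) a) \<in> borel_measurable S" by simp
  qed (unfold S_def, measurable)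
  have m_pie[measurable]: "(\<lambda>w::'x \<times> real \<times> 'a \<times> real. pie (fst w) t' (fst (snd (snd w)))) \<in> borel_measurable S"
  proof (rule measurable_compose_countable[where f="\<lambda>a w. pie (fst w) t' a"])
    fix a :: 'a
    have "(\<lambda>w::'x \<times> real \<times> 'a \<times> real. fst w) \<in> measurable S Px" unfolding S_def by measurable
    from measurable_compose[OF this pie_meas[of a]] show "(\<lambda>w. pie (fst w) t' a) \<in> borel_measurable S" by simp
  qed (unfold S_def, measurable)
  have m_fht[measurable]: "(\<lambda>x. fhat x t' b) \<in> borel_measurable Px" for b
  proof -
    have "(\<lambda>x. (x, t')) \<in> measurable Px (Px \<Otimes>\<^sub>M borel)" by measurable
    from measurable_compose[OF this fhat_meas[of b]] show ?thesis by simp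
  qed
  have m_G[measurable]: "G \<in> borel_measurable Px" unfolding G_def by measurable
  have m_GS[measurable]: "(\<lambda>w::'x \<times> real \<times> 'a \<times> real. G (fst w)) \<in> borel_measurable S"
  proof -
    have "(\<lambda>w::'x \<times> real \<times> 'a \<times> real. fst w) \<in> measurable S Px" unfolding S_def by measurable
    from measurable_compose[OF this m_G] show ?thesis by simp
  qed
  have h_eq: "h = (\<lambda>w. ind_phi phi (fst (snd w)) t' / pf * (pie (fst w) t' (fst (snd (snd w))) / pi0 (fst w) (fst (snd w)) (fst (snd (snd w))))
      * (snd (snd (snd w)) - fhat (fst w) (fst (snd w)) (fst (snd (snd w)))) + G (fst w))"
    unfolding h_def G_def pf_def by (simp add: split_beta fun_eq_iff)
  have m_h[measurable]: "h \<in> borel_measurable S"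
  proof -
    have mt: "(\<lambda>w::'x \<times> real \<times> 'a \<times> real. fst (snd w)) \<in> borel_measurable S" unfolding S_def by measurable
    have mr: "(\<lambda>w::'x \<times> real \<times> 'a \<times> real. snd (snd (snd w))) \<in> borel_measurable S" unfolding S_def by measurable
    have mi: "(\<lambda>w::'x \<times> real \<times> 'a \<times> real. ind_phi phi (fst (snd w)) t') \<in> borel_measurable S"
      using measurable_compose[OF mt ind_m] by simp
    show ?thesis unfolding h_eq
      by (intro borel_measurable_add borel_measurable_times borel_measurable_divide borel_measurable_diff
          borel_measurable_const m_pi0 m_pie m_fh m_GS mr mi)

  qed
  have R_int: "integrable (R x t a) (\<lambda>r. r)" for x t a
  proof -
    interpret Rp: prob_space "R x t a" by (rule R_prob)
    have m: "(\<lambda>r::real. r) \<in> borel_measurable (R x t a)" by (simp add: measurable_cong_sets[OF R_sets refl])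
    show ?thesis
      by (rule Rp.integrable_const_bound[where B=rmax, OF _ m]) (use R_range[of x t a] in \<open>eventually_elim, auto\<close>)
  qed
  have q_bd: "0 \<le> qfun R x t a \<and> qfun R x t a \<le> rmax" for x t a
  proof -
    interpret Rp: prob_space "R x t a" by (rule R_prob)
    have "0 \<le> qfun R x t a" unfolding qfun_def
      by (rule integral_nonneg_AE) (use R_range[of x t a] in \<open>eventually_elim, auto\<close>)
    moreover have "qfun R x t a \<le> (\<integral>r. rmax \<partial>R x t a)" unfolding qfun_def
      by (rule integral_mono_AE[OF R_int]) (use R_range[of x t a] in \<open>auto elim: eventually_mono\<close>)
    ultimately show ?thesis by (simp add: Rp.prob_space)
  qed
  have R_aff: "(\<integral>r. c * r + d \<partial>R x t a) = c * qfun R x t a + d" for x t a c d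
  proof -
    interpret Rp: prob_space "R x t a" by (rule R_prob)
    show ?thesis unfolding qfun_def using R_int[of x t a] by (simp add: Rp.prob_space)
  qed
  have qm[measurable]: "(\<lambda>z. qfun R (fst z) (snd z) a) \<in> borel_measurable (Px \<Otimes>\<^sub>M borel)" for a
  proof -
    have "(\<lambda>z. (fst z, snd z, a)) \<in> measurable (Px \<Otimes>\<^sub>M borel) (Px \<Otimes>\<^sub>M borel \<Otimes>\<^sub>M count_space UNIV)" by measurable
    from measurable_compose[OF this R_meas]
    have "(\<lambda>z. R (fst z) (snd z) a) \<in> measurable (Px \<Otimes>\<^sub>M borel) (subprob_algebra borel)" by simp
    from measurable_compose[OF this integral_measurable_subprob_algebra[of "\<lambda>r::real. r" borel]]
    show ?thesis unfolding qfun_def by simp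
  qed
  have qm'[measurable]: "(\<lambda>x. qfun R x t' a) \<in> borel_measurable Px" for a
  proof -
    have "(\<lambda>x. (x, t')) \<in> measurable Px (Px \<Otimes>\<^sub>M borel)" by measurable
    from measurable_compose[OF this qm[of a]] show ?thesis by simp
  qed
  define C where "C = (rmax + Bf) / pf + Bf"
  have pt_bd: "\<bar>k * (r - f) + g\<bar> \<le> k * (rmax + Bf) + Bf"
    if "k \<ge> 0" "0 \<le> r" "r \<le> rmax" "\<bar>f\<bar> \<le> Bf" "\<bar>g\<bar> \<le> Bf" for k r f g :: real
  proof -
    have "\<bar>k * (r - f) + g\<bar> \<le> \<bar>k * (r - f)\<bar> + \<bar>g\<bar>" by (rule abs_triangle_ineq)
    also have "\<bar>k * (r - f)\<bar> = k * \<bar>r - f\<bar>" using that by (simp add: abs_mult)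
    also have "k * \<bar>r - f\<bar> \<le> k * (rmax + Bf)" using that by (intro mult_left_mono) auto
    finally show ?thesis using that by linarith
  qed
  have Kbd: "(\<integral>\<^sup>+w. ennreal (norm (h w)) \<partial>K (x, t)) \<le> ennreal C" if x: "x \<in> space Px" for x t
  proof -
    define c where "c a = ind_phi phi t t' / pf * (pie x t' a / pi0 x t a) * (rmax + Bf) + Bf" for a
    have c0: "c a \<ge> 0" for a unfolding c_def using ind01[of t] pf0 pie_nonneg[of x t' a] pi0_nonneg[of x t a] Bf0 rmax_nonneg
      by (intro add_nonneg_nonneg mult_nonneg_nonneg divide_nonneg_nonneg) auto
    have "(\<integral>\<^sup>+w. ennreal (norm (h w)) \<partial>K (x, t))
        = (\<integral>\<^sup>+a. \<integral>\<^sup>+w. ennreal (norm (h w)) \<partial>distr (R x t a) S (\<lambda>r. (x, t, a, r)) \<partial>act_dist (pi0 x t))"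
      unfolding K_def by (simp, rule nn_integral_bind[OF _ Dkern[OF x]]) measurable
    also have "\<dots> = (\<Sum>a\<in>UNIV. ennreal (pi0 x t a) * \<integral>\<^sup>+r. ennreal (norm (h (x, t, a, r))) \<partial>R x t a)"
      by (simp add: act_nn_integral nn_integral_distr[OF rm[OF x]])
    also have "\<dots> \<le> (\<Sum>a\<in>UNIV. ennreal (pi0 x t a) * ennreal (c a))"
    proof (intro sum_mono mult_left_mono)
      fix a
      interpret Rp: prob_space "R x t a" by (rule R_prob)
      have "(\<integral>\<^sup>+r. ennreal (norm (h (x, t, a, r))) \<partial>R x t a) \<le> (\<integral>\<^sup>+r. ennreal (c a) \<partial>R x t a)"
      proof (rule nn_integral_mono_AE)
        show "AE r in R x t a. ennreal (norm (h (x, t, a, r))) \<le> ennreal (c a)"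
          using R_range[of x t a]
        proof eventually_elim
          case (elim r)
          have k0: "ind_phi phi t t' / pf * (pie x t' a / pi0 x t a) \<ge> 0"
            using ind01[of t] pf0 pie_nonneg[of x t' a] pi0_nonneg[of x t a] by auto
          have "norm (h (x, t, a, r)) \<le> c a" unfolding h_eq c_def pf_def[symmetric] real_norm_def
            using pt_bd[OF k0, of r "fhat x t a" "G x"] elim Bf G_bd by (simp add: pf_def)
          then show ?case by (rule ennreal_leI)
        qed
      qed
      also have "\<dots> = ennreal (c a)" by (simp add: Rp.emeasure_space_1)
      finally show "(\<integral>\<^sup>+r. ennreal (norm (h (x, t, a, r))) \<partial>R x t a) \<le> ennreal (c a)" .
    qed simp
    also have "\<dots> = ennreal (\<Sum>a\<in>UNIV. pi0 x t a * c a)"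
      using c0 pi0_nonneg by (simp add: ennreal_mult[symmetric] sum_ennreal)
    also have "\<dots> \<le> ennreal C"
    proof (rule ennreal_leI)
      have "(\<Sum>a\<in>UNIV. pi0 x t a * c a) \<le> (\<Sum>a\<in>UNIV. (ind_phi phi t t' / pf * (rmax + Bf)) * pie x t' a + Bf * pi0 x t a)"
      proof (rule sum_mono)
        fix a
        have k0: "ind_phi phi t t' / pf * (rmax + Bf) \<ge> 0" using ind01[of t] pf0 Bf0 rmax_nonneg by auto
        have "pi0 x t a * c a = (ind_phi phi t t' / pf * (rmax + Bf)) * (pi0 x t a * (pie x t' a / pi0 x t a)) + Bf * pi0 x t a"
        proof -
          have gen: "p * (i / q * y * (m + b) + b) = (i / q * (m + b)) * (p * y) + b * p" for p i q y m b :: real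
            by (simp add: algebra_simps)
          show ?thesis unfolding c_def by (rule gen)
        qed
        also have "\<dots> \<le> (ind_phi phi t t' / pf * (rmax + Bf)) * pie x t' a + Bf * pi0 x t a"
          using mult_left_mono[OF ratio[of x t a] k0] by simp
        finally show "pi0 x t a * c a \<le> (ind_phi phi t t' / pf * (rmax + Bf)) * pie x t' a + Bf * pi0 x t a" .
      qed
      also have "\<dots> = ind_phi phi t t' / pf * (rmax + Bf) + Bf"
      proof -
        have "(\<Sum>a\<in>UNIV. (ind_phi phi t t' / pf * (rmax + Bf)) * pie x t' a + Bf * pi0 x t a)
            = (ind_phi phi t t' / pf * (rmax + Bf)) * (\<Sum>a\<in>UNIV. pie x t' a) + Bf * (\<Sum>a\<in>UNIV. pi0 x t a)"
          by (simp only: sum.distrib sum_distrib_left)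
        then show ?thesis by (simp only: pie_sum pi0_sum mult_1_right)
      qed
      also have "\<dots> \<le> C" unfolding C_def using ind01[of t] pf0 Bf0 rmax_nonneg
        by (auto simp: divide_simps intro!: mult_left_le_one_le)
      finally show "(\<Sum>a\<in>UNIV. pi0 x t a * c a) \<le> C" .
    qed
    finally show ?thesis .
  qed
  have sets_K: "sets (K z) = sets S" if "z \<in> space (Px \<Otimes>\<^sub>M borel)" for z
    by (rule sets_kernel[OF Km that])
  have int_K: "integrable (K (x, t)) h" if x: "x \<in> space Px" for x t
  proof (rule integrableI_bounded)
    show "h \<in> borel_measurable (K (x, t))"
    proof -
      have sK: "sets (K (x, t)) = sets S" using sets_K[of "(x, t)"] x by (simp add: space_pair_measure)
      show ?thesis by (simp only: measurable_cong_sets[OF sK refl] m_h)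
    qed
    show "(\<integral>\<^sup>+w. ennreal (norm (h w)) \<partial>K (x, t)) < \<infinity>" using Kbd[OF x, of t] by (rule le_less_trans) simp
  qed
  have int_sample: "integrable (Pxt \<bind> K) h"
  proof (rule integrableI_bounded)
    show "h \<in> borel_measurable (Pxt \<bind> K)"
      by (simp only: measurable_cong_sets[OF sets_sample refl] m_h)
    have "(\<integral>\<^sup>+w. ennreal (norm (h w)) \<partial>(Pxt \<bind> K)) = (\<integral>\<^sup>+z. \<integral>\<^sup>+w. ennreal (norm (h w)) \<partial>K z \<partial>Pxt)"
      by (rule nn_integral_bind[OF _ KmP]) measurable
    also have "\<dots> \<le> (\<integral>\<^sup>+z. ennreal C \<partial>Pxt)"
      by (rule nn_integral_mono) (use Kbd in \<open>auto simp: space_Pxt\<close>)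
    also have "\<dots> = ennreal C" using prob_space.emeasure_space_1[OF prob_Pxt] by simp
    finally show "(\<integral>\<^sup>+w. ennreal (norm (h w)) \<partial>(Pxt \<bind> K)) < \<infinity>" by (rule le_less_trans) simp
  qed
  \<comment> \<open>step 1: from the data set to a single sample\<close>
  define \<Omega> where "\<Omega> = data_dist n Px Pxt pi0 R"
  have \<Omega>_eq: "\<Omega> = PiM {..<n} (\<lambda>_. Pxt \<bind> K)" unfolding \<Omega>_def data_dist_def sample ..
  have opfv_eq: "opfv phi pt T t' pie pi0 fhat n D = 1 / real n * (\<Sum>i<n. h (D i))" for D
    unfolding opfv_def h_def by simp
  have hm_s: "h \<in> borel_measurable (Pxt \<bind> K)"
    by (simp only: measurable_cong_sets[OF sets_sample refl] m_h)
  have mcomp: "(\<lambda>\<omega>. \<omega> i) \<in> measurable \<Omega> (Pxt \<bind> K)" if "i < n" for i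
    unfolding \<Omega>_eq by (rule measurable_component_singleton) (use that in simp)
  have comp: "distr \<Omega> (Pxt \<bind> K) (\<lambda>\<omega>. \<omega> i) = Pxt \<bind> K" if "i < n" for i
    unfolding \<Omega>_eq by (rule distr_PiM_component) (use prob_sample that in auto)
  have int_i: "integrable \<Omega> (\<lambda>\<omega>. h (\<omega> i))" if "i < n" for i
    using integrable_distr_eq[OF mcomp[OF that] hm_s] comp[OF that] int_sample by simp
  have E_i: "(\<integral>\<omega>. h (\<omega> i) \<partial>\<Omega>) = integral\<^sup>L (Pxt \<bind> K) h" if "i < n" for i
    using integral_distr[OF mcomp[OF that] hm_s] comp[OF that] by simp
  have E1: "integral\<^sup>L \<Omega> (opfv phi pt T t' pie pi0 fhat n) = integral\<^sup>L (Pxt \<bind> K) h"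
  proof -
    have "integral\<^sup>L \<Omega> (opfv phi pt T t' pie pi0 fhat n) = 1 / real n * (\<Sum>i<n. \<integral>\<omega>. h (\<omega> i) \<partial>\<Omega>)"
      unfolding opfv_eq using int_i by (simp add: integral_sum)
    also have "\<dots> = integral\<^sup>L (Pxt \<bind> K) h" using E_i n_pos by simp
    finally show ?thesis .
  qed
  \<comment> \<open>step 2: inner integral over actions and rewards\<close>
  define A where "A z = (\<Sum>a\<in>UNIV. pie (fst z) t' a * (ind_phi phi (snd z) t' / pf * (qfun R (fst z) (snd z) a - fhat (fst z) (snd z) a)))" for z
  have inner: "integral\<^sup>L (K (x, t)) h = (\<Sum>a\<in>UNIV. pi0 x t a * (ind_phi phi t t' / pf * (pie x t' a / pi0 x t a) * (qfun R x t a - fhat x t a) + G x))"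
    if x: "x \<in> space Px" for x t
  proof -
    have KK: "K (x, t) = act_dist (pi0 x t) \<bind> (\<lambda>a. distr (R x t a) S (\<lambda>r. (x, t, a, r)))" unfolding K_def by simp
    have "integral\<^sup>L (K (x, t)) h = (\<integral>a. integral\<^sup>L (distr (R x t a) S (\<lambda>r. (x, t, a, r))) h \<partial>act_dist (pi0 x t))"
      unfolding KK by (rule integral_bind_real[OF m_h Dkern[OF x]]) (use int_K[OF x, of t] KK in simp)
    also have "\<dots> = (\<Sum>a\<in>UNIV. pi0 x t a * integral\<^sup>L (distr (R x t a) S (\<lambda>r. (x, t, a, r))) h)"
      by (rule act_integral) (rule pi0_nonneg)
    also have "\<dots> = (\<Sum>a\<in>UNIV. pi0 x t a * (ind_phi phi t t' / pf * (pie x t' a / pi0 x t a) * (qfun R x t a - fhat x t a) + G x))"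
    proof (intro sum.cong refl arg_cong2[where f="(*)"])
      fix a
      define k where "k = ind_phi phi t t' / pf * (pie x t' a / pi0 x t a)"
      have "integral\<^sup>L (distr (R x t a) S (\<lambda>r. (x, t, a, r))) h = (\<integral>r. h (x, t, a, r) \<partial>R x t a)"
        by (rule integral_distr[OF rm[OF x] m_h])
      also have "\<dots> = (\<integral>r. k * r + (G x - k * fhat x t a) \<partial>R x t a)"
      proof (intro Bochner_Integration.integral_cong refl)
        fix r
        have "h (x, t, a, r) = k * (r - fhat x t a) + G x" by (simp add: h_eq k_def)
        also have "\<dots> = k * r + (G x - k * fhat x t a)" by (simp add: algebra_simps)
        finally show "h (x, t, a, r) = k * r + (G x - k * fhat x t a)" .
      qed
      also have "\<dots> = k * qfun R x t a + (G x - k * fhat x t a)" by (rule R_aff)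
      also have "\<dots> = k * (qfun R x t a - fhat x t a) + G x" by (simp add: algebra_simps)
      finally show "integral\<^sup>L (distr (R x t a) S (\<lambda>r. (x, t, a, r))) h
          = ind_phi phi t t' / pf * (pie x t' a / pi0 x t a) * (qfun R x t a - fhat x t a) + G x"
        unfolding k_def .
    qed
    finally show ?thesis .
  qed
  have AE_T: "AE z in Pxt. snd z \<in> {0..T}"
  proof -
    have "AE t in P. t \<in> {0..T}" unfolding P_def
    proof (subst AE_density)
      show "(\<lambda>t. ennreal (pt t)) \<in> borel_measurable lborel" using pt_meas by simp
      show "AE t in lborel. 0 < ennreal (pt t) \<longrightarrow> t \<in> {0..T}"
      proof (rule AE_I2, rule impI, rule ccontr)
        fix t assume "0 < ennreal (pt t)" "t \<notin> {0..T}"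
        then show False using pt_supp[of t] by simp
      qed
    qed
    have sPP: "sets (Px \<Otimes>\<^sub>M P) = sets (Px \<Otimes>\<^sub>M borel)" by (rule sets_pair_measure_cong[OF refl sets_P])
    have mset: "{z \<in> space (Px \<Otimes>\<^sub>M borel). snd z \<in> {0..T}} \<in> sets (Px \<Otimes>\<^sub>M borel)" by measurable
    have "AE z in Px \<Otimes>\<^sub>M P. snd z \<in> {0..T}"
    proof (rule PP.AE_pair_measure)
      show "{z \<in> space (Px \<Otimes>\<^sub>M P). snd z \<in> {0..T}} \<in> sets (Px \<Otimes>\<^sub>M P)"
        using mset unfolding sPP sets_eq_imp_space_eq[OF sPP] .
      show "AE x in Px. AE y in P. snd (x, y) \<in> {0..T}" using \<open>AE t in P. t \<in> {0..T}\<close> by simp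
    qed
    then show ?thesis unfolding Pxt_eq .
  qed
  have inner_AE: "AE z in Pxt. integral\<^sup>L (K z) h = A z + G (fst z)"
    using AE_T AE_space
  proof eventually_elim
    case (elim z)
    obtain x t where z: "z = (x, t)" by (cases z)
    have x: "x \<in> space Px" and tT: "t \<in> {0..T}" using elim z space_Pxt by auto
    have "integral\<^sup>L (K z) h = (\<Sum>a\<in>UNIV. pie x t' a * (ind_phi phi t t' / pf * (qfun R x t a - fhat x t a)) + pi0 x t a * G x)"
      unfolding z inner[OF x]
    proof (intro sum.cong refl)
      fix a
      have gen: "p * (i / q * y * d + g) = (p * y) * (i / q * d) + p * g" for p i q y d g :: real
        by (simp add: algebra_simps)
      show "pi0 x t a * (ind_phi phi t t' / pf * (pie x t' a / pi0 x t a) * (qfun R x t a - fhat x t a) + G x)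
          = pie x t' a * (ind_phi phi t t' / pf * (qfun R x t a - fhat x t a)) + pi0 x t a * G x"
        unfolding gen ratio_eq[OF x tT] ..
    qed
    also have "\<dots> = A z + (\<Sum>a\<in>UNIV. pi0 x t a) * G x"
      unfolding A_def z by (simp add: sum.distrib sum_distrib_right)
    finally show ?case using pi0_sum z by simp
  qed
  interpret PXT: prob_space Pxt by (rule prob_Pxt)
  define \<Phi> where "\<Phi> x = (\<Sum>a\<in>UNIV. pie x t' a * (qfun R x t' a - fhat x t' a))" for x
  have pm2[measurable]: "(\<lambda>z. pie (fst z) t' a) \<in> borel_measurable (Px \<Otimes>\<^sub>M borel)" for a
    using measurable_compose[OF measurable_fst pie_meas[of a]] by simp
  have fm2[measurable]: "(\<lambda>z. fhat (fst z) (snd z) a) \<in> borel_measurable (Px \<Otimes>\<^sub>M borel)" for a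
    using fhat_meas[of a] by (simp add: case_prod_beta')
  have im2[measurable]: "(\<lambda>z. ind_phi phi (snd z) t') \<in> borel_measurable (Px \<Otimes>\<^sub>M borel)"
    using measurable_compose[OF measurable_snd ind_m] by simp
  have A_m0: "A \<in> borel_measurable (Px \<Otimes>\<^sub>M borel)" unfolding A_def by measurable
  have A_m: "A \<in> borel_measurable Pxt" by (simp only: measurable_cong_sets[OF sets_Pxt refl] A_m0)
  have \<Phi>_m[measurable]: "\<Phi> \<in> borel_measurable Px" unfolding \<Phi>_def by measurable
  have G2_m: "(\<lambda>z. G (fst z)) \<in> borel_measurable Pxt"
  proof -
    have "(\<lambda>z. G (fst z)) \<in> borel_measurable (Px \<Otimes>\<^sub>M borel)"
      using measurable_compose[OF measurable_fst m_G] by simp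
    then show ?thesis by (simp only: measurable_cong_sets[OF sets_Pxt refl])
  qed
  have I\<Phi>_m: "(\<lambda>z. ind_phi phi (snd z) t' / pf * \<Phi> (fst z)) \<in> borel_measurable Pxt"
  proof -
    have "(\<lambda>z. \<Phi> (fst z)) \<in> borel_measurable (Px \<Otimes>\<^sub>M borel)"
      using measurable_compose[OF measurable_fst \<Phi>_m] by simp
    then have "(\<lambda>z. ind_phi phi (snd z) t' / pf * \<Phi> (fst z)) \<in> borel_measurable (Px \<Otimes>\<^sub>M borel)"
      by measurable
    then show ?thesis by (simp only: measurable_cong_sets[OF sets_Pxt refl])
  qed
  have Kint_m: "(\<lambda>z. integral\<^sup>L (K z) h) \<in> borel_measurable Pxt"
    using measurable_compose[OF KmP integral_measurable_subprob_algebra[OF m_h]] by simp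
  have qf_bd: "\<bar>qfun R x t a - fhat x t a\<bar> \<le> rmax + Bf" for x t a
    using q_bd[of x t a] Bf[of x t a] by linarith
  have sum_bd: "\<bar>\<Sum>a\<in>UNIV. pie x t' a * y a\<bar> \<le> M" if "\<And>a. \<bar>y a\<bar> \<le> M" for x y M
  proof -
    have "\<bar>\<Sum>a\<in>UNIV. pie x t' a * y a\<bar> \<le> (\<Sum>a\<in>UNIV. \<bar>pie x t' a * y a\<bar>)" by (rule sum_abs)
    also have "\<dots> \<le> (\<Sum>a\<in>UNIV. pie x t' a * M)"
      by (intro sum_mono) (auto simp: abs_mult pie_nonneg intro!: mult_left_mono that)
    also have "\<dots> = M" using pie_sum by (simp add: sum_distrib_right[symmetric])
    finally show ?thesis .
  qed
  have div_bd: "\<bar>i / pf * d\<bar> \<le> (rmax + Bf) / pf" if "0 \<le> i" "i \<le> 1" "\<bar>d\<bar> \<le> rmax + Bf" for i d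
  proof -
    have "\<bar>i / pf * d\<bar> = i * \<bar>d\<bar> / pf" using pf0 that by (simp add: abs_mult)
    also have "i * \<bar>d\<bar> \<le> 1 * (rmax + Bf)" using that by (intro mult_mono) auto
    then have "i * \<bar>d\<bar> / pf \<le> (rmax + Bf) / pf" using pf0 by (simp add: divide_right_mono)
    finally show ?thesis .
  qed
  have int_A: "integrable Pxt A"
  proof (rule PXT.integrable_const_bound[where B="(rmax + Bf) / pf", OF AE_I2 A_m])
    fix z show "norm (A z) \<le> (rmax + Bf) / pf"
      unfolding A_def real_norm_def by (rule sum_bd) (use div_bd ind01 qf_bd in blast)
  qed
  have int_G2: "integrable Pxt (\<lambda>z. G (fst z))"
    by (rule PXT.integrable_const_bound[where B=Bf, OF AE_I2 G2_m]) (use G_bd in simp)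
  have \<Phi>_bd: "\<bar>\<Phi> x\<bar> \<le> rmax + Bf" for x unfolding \<Phi>_def by (rule sum_bd) (rule qf_bd)
  have int_I\<Phi>: "integrable Pxt (\<lambda>z. ind_phi phi (snd z) t' / pf * \<Phi> (fst z))"
    by (rule PXT.integrable_const_bound[where B="(rmax + Bf) / pf", OF AE_I2 I\<Phi>_m]) (use div_bd ind01 \<Phi>_bd in simp)
  have int_\<Phi>: "integrable Px \<Phi>"
    by (rule Px.integrable_const_bound[where B="rmax + Bf", OF AE_I2 \<Phi>_m]) (use \<Phi>_bd in simp)
  have int_G: "integrable Px G"
    by (rule Px.integrable_const_bound[where B="Bf", OF AE_I2 m_G]) (use G_bd in simp)
  have int_ind: "(\<integral>t. ind_phi phi t t' \<partial>P) = pf"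
  proof -
    have "(\<integral>t. ind_phi phi t t' \<partial>P) = (\<integral>t. pt t *\<^sub>R ind_phi phi t t' \<partial>lborel)"
      unfolding P_def by (rule integral_density) (use pt_meas pt_nonneg in auto)
    also have "\<dots> = (\<integral>s. indicator {0..T} s * pt s * ind_phi phi s t' \<partial>lborel)"
      by (intro Bochner_Integration.integral_cong refl) (use pt_supp in \<open>auto simp: indicator_def\<close>)
    finally show ?thesis unfolding pf_def p_phi_def .
  qed
  have G_fub: "(\<integral>z. G (fst z) \<partial>Pxt) = (\<integral>x. G x \<partial>Px)"
  proof -
    have "(\<integral>z. G (fst z) \<partial>Pxt) = (\<integral>x. (\<integral>t. G x \<partial>P) \<partial>Px)"
      using PP.integral_fst'[of "\<lambda>z. G (fst z)"] int_G2 unfolding Pxt_eq by simp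
    then show ?thesis by (simp add: P.prob_space)
  qed
  have I\<Phi>_fub: "(\<integral>z. ind_phi phi (snd z) t' / pf * \<Phi> (fst z) \<partial>Pxt) = (\<integral>x. \<Phi> x \<partial>Px)"
  proof -
    have "(\<integral>z. ind_phi phi (snd z) t' / pf * \<Phi> (fst z) \<partial>Pxt) = (\<integral>x. (\<integral>t. ind_phi phi t t' / pf * \<Phi> x \<partial>P) \<partial>Px)"
    proof -
      have i: "integrable (Px \<Otimes>\<^sub>M P) (\<lambda>z. ind_phi phi (snd z) t' / pf * \<Phi> (fst z))" using int_I\<Phi> unfolding Pxt_eq .
      from PP.integral_fst'[OF i] show ?thesis unfolding Pxt_eq by (simp only: fst_conv snd_conv)
    qed
    also have "\<dots> = (\<integral>x. \<Phi> x \<partial>Px)"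
    proof (intro Bochner_Integration.integral_cong refl)
      fix x
      have "(\<integral>t. ind_phi phi t t' / pf * \<Phi> x \<partial>P) = (\<integral>t. ind_phi phi t t' * (\<Phi> x / pf) \<partial>P)" by simp
      also have "\<dots> = (\<integral>t. ind_phi phi t t' \<partial>P) * (\<Phi> x / pf)" by (rule integral_mult_left_zero)
      also have "\<dots> = \<Phi> x" using pf0 int_ind by simp
      finally show "(\<integral>t. ind_phi phi t t' / pf * \<Phi> x \<partial>P) = \<Phi> x" .
    qed
    finally show ?thesis .
  qed
  have S1: "integral\<^sup>L (Pxt \<bind> K) h = (\<integral>z. A z \<partial>Pxt) + (\<integral>x. G x \<partial>Px)"
  proof -
    have "integral\<^sup>L (Pxt \<bind> K) h = (\<integral>z. integral\<^sup>L (K z) h \<partial>Pxt)"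
      by (rule integral_bind_real[OF m_h KmP int_sample])
    also have "\<dots> = (\<integral>z. A z + G (fst z) \<partial>Pxt)"
      by (rule integral_cong_AE[OF Kint_m _ inner_AE]) (use A_m G2_m in measurable)
    also have "\<dots> = (\<integral>z. A z \<partial>Pxt) + (\<integral>z. G (fst z) \<partial>Pxt)"
      by (rule Bochner_Integration.integral_add[OF int_A int_G2])
    finally show ?thesis using G_fub by simp
  qed
  have S2: "policy_value Px_t' pie R t' = (\<integral>x. \<Phi> x \<partial>Px) + (\<integral>x. G x \<partial>Px)"
  proof -
    have "policy_value Px_t' pie R t' = (\<integral>x. \<Phi> x + G x \<partial>Px)"
      unfolding policy_value_def target_ctx
    proof (intro Bochner_Integration.integral_cong refl)
      fix x
      show "(\<Sum>a\<in>UNIV. pie x t' a * qfun R x t' a) = \<Phi> x + G x"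
        unfolding \<Phi>_def G_def by (simp add: sum.distrib[symmetric] algebra_simps)
    qed
    also have "\<dots> = (\<integral>x. \<Phi> x \<partial>Px) + (\<integral>x. G x \<partial>Px)"
      by (rule Bochner_Integration.integral_add[OF int_\<Phi> int_G])
    finally show ?thesis .
  qed
  have S3: "integral\<^sup>L Pxt (\<lambda>(x, t). \<Sum>a\<in>UNIV. pie x t' a *
             (ind_phi phi t t' / p_phi phi pt T t'
               * ((qfun R x t a - qfun R x t' a) - (fhat x t a - fhat x t' a))))
      = (\<integral>z. A z \<partial>Pxt) - (\<integral>x. \<Phi> x \<partial>Px)"
  proof -
    have "integral\<^sup>L Pxt (\<lambda>(x, t). \<Sum>a\<in>UNIV. pie x t' a *
             (ind_phi phi t t' / p_phi phi pt T t'
               * ((qfun R x t a - qfun R x t' a) - (fhat x t a - fhat x t' a))))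
        = (\<integral>z. A z - ind_phi phi (snd z) t' / pf * \<Phi> (fst z) \<partial>Pxt)"
    proof (intro Bochner_Integration.integral_cong refl)
      fix z :: "'x \<times> real"
      obtain x t where z: "z = (x, t)" by (cases z)
      have "(\<Sum>a\<in>UNIV. pie x t' a * (ind_phi phi t t' / pf * ((qfun R x t a - qfun R x t' a) - (fhat x t a - fhat x t' a))))
          = (\<Sum>a\<in>UNIV. pie x t' a * (ind_phi phi t t' / pf * (qfun R x t a - fhat x t a))
               - ind_phi phi t t' / pf * (pie x t' a * (qfun R x t' a - fhat x t' a)))"
        by (intro sum.cong refl) (simp add: algebra_simps)
      also have "\<dots> = A z - ind_phi phi (snd z) t' / pf * \<Phi> (fst z)"
        unfolding A_def \<Phi>_def z by (simp add: sum_subtractf sum_distrib_left)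
      finally show "(case z of (x, t) \<Rightarrow> \<Sum>a\<in>UNIV. pie x t' a *
             (ind_phi phi t t' / p_phi phi pt T t'
               * ((qfun R x t a - qfun R x t' a) - (fhat x t a - fhat x t' a))))
          = A z - ind_phi phi (snd z) t' / pf * \<Phi> (fst z)" unfolding z pf_def by simp
    qed
    also have "\<dots> = (\<integral>z. A z \<partial>Pxt) - (\<integral>z. ind_phi phi (snd z) t' / pf * \<Phi> (fst z) \<partial>Pxt)"
      by (rule Bochner_Integration.integral_diff[OF int_A int_I\<Phi>])
    finally show ?thesis using I\<Phi>_fub by simp
  qed
  show ?thesis
    unfolding \<Omega>_def[symmetric] E1 S1 S2 S3 by simp
qed

end
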